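(* Let $\{M_p\mid p\in P\}$ be a Morse decomposition of a multivector field on a finite simplicial complex $K$, and let $S$ and $S'$ be the matrices output by ConMat on the filtered boundary matrices $A$ and $A'$ of two Morse fixed admissible enumerations of $K$. Then there exists a permutation matrix $R$ such that $R^{T}SR=S'$.
   Context: $K$ is a finite simplicial complex ($\tau\le\sigma$: $\tau$ is a face of $\sigma$; $\mathrm{cl}(\sigma)=\{\tau:\tau\le\sigma\}$). A multivector field $\mathcal V$ on $K$ is a partition of $K$ into convex sets $V$ (if $\sigma,\tau\in V$ and $\sigma\le\mu\le\tau$ then $\mu\in V$); $[\sigma]_{\mathcal V}$ is the part containing $\sigma$, $F_{\mathcal V}(\sigma)=[\sigma]_{\mathcal V}\cup\mathrm{cl}(\sigma)$, and a path is a sequence $\sigma_1,\dots,\sigma_r$ with $\sigma_k\in F_{\mathcal V}(\sigma_{k-1})$. A Morse decomposition indexed by a finite poset $(P,\le_P)$ is a partition $K=\bigsqcup_{p\in P}M_p$ such that every path from $M_p$ to $M_q$ has $q\le_P p$; $[\sigma]_P$ is the $p$ with $\sigma\in M_p$. An admissible enumeration is $\sigma_1,\dots,\sigma_n$ of all simplices of $K$ such that (a) for some linear extension $\le_{lin}$ of $\le_P$, $i\le j\Rightarrow[\sigma_i]_P\le_{lin}[\sigma_j]_P$; (b) if $\sigma_i$ is a proper face of $\sigma_j$ then $i<j$. Two admissible enumerations are Morse fixed if for every $p$ they induce the same order on $M_p$. The filtered boundary matrix is the $n\times n$ $\mathbb Z_2$-matrix with entry $(i,j)$ equal to $1$ iff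 $\sigma_i$ is a codimension-one face of $\sigma_j$. For a nonzero column $j$ of a matrix $B$, $\mathrm{low}_B(j)$ is the largest $i$ with $B[i,j]=1$. Column (and row) $j$ is homogeneous if nonzero and $\sigma_j$, $\sigma_{\mathrm{low}_B(j)}$ are in the same Morse set; then index $\mathrm{low}_B(j)$ is targetable. $J_h(B)$, $J_t(B)$: sets of homogeneous, targetable indices. Algorithm ConMat on $A$ (in place): for $j=1,\dots,n$: for $i=\mathrm{low}_A(j)$ down to $1$: if $A[i,j]=1$ and some column $s<j$ of the current matrix is homogeneous with $\mathrm{low}_A(s)=i$, add column $s$ to column $j$ (mod 2). With $A_{out}$ the result, let $J=\{1,\dots,n\}\setminus J_h(A_{out})\setminus J_t(A_{out})$; the output is the submatrix of $A_{out}$ on rows and columns in $J$ (in their original order). *)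

theory Defs
  imports "Jordan_Normal_Form.Matrix" "HOL-Library.Z2" "HOL-Library.Disjoint_Sets"
          "HOL-Combinatorics.Permutations"
begin

definition simplicial_complex :: "'v set set \<Rightarrow> bool" where
  "simplicial_complex K \<longleftrightarrow> finite K \<and>
     (\<forall>\<sigma>\<in>K. finite \<sigma> \<and> \<sigma> \<noteq> {} \<and> (\<forall>\<tau>. \<tau> \<subseteq> \<sigma> \<and> \<tau> \<noteq> {} \<longrightarrow> \<tau> \<in> K))"

definition closure_sc :: "'v set set \<Rightarrow> 'v set \<Rightarrow> 'v set set" where
  "closure_sc K \<sigma> = {\<tau> \<in> K. \<tau> \<subseteq> \<sigma>}"

definition codim1_face :: "'v set \<Rightarrow> 'v set \<Rightarrow> bool" where
  "codim1_face \<tau> \<sigma> \<longleftrightarrow> \<tau> \<subseteq> \<sigma> \<and> card \<sigma> = card \<tau> + 1"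

definition convex_sc :: "'v set set \<Rightarrow> 'v set set \<Rightarrow> bool" where
  "convex_sc K V \<longleftrightarrow> (\<forall>\<sigma>\<in>V. \<forall>\<tau>\<in>V. \<forall>\<mu>\<in>K. \<sigma> \<subseteq> \<mu> \<and> \<mu> \<subseteq> \<tau> \<longrightarrow> \<mu> \<in> V)"

definition multivector_field :: "'v set set \<Rightarrow> 'v set set set \<Rightarrow> bool" where
  "multivector_field K \<V> \<longleftrightarrow> partition_on K \<V> \<and> (\<forall>V\<in>\<V>. convex_sc K V)"

definition mv_class :: "'v set set set \<Rightarrow> 'v set \<Rightarrow> 'v set set" where
  "mv_class \<V> \<sigma> = (THE V. V \<in> \<V> \<and> \<sigma> \<in> V)"

definition F_mv :: "'v set set \<Rightarrow> 'v set set set \<Rightarrow> 'v set \<Rightarrow> 'v set set" where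
  "F_mv K \<V> \<sigma> = mv_class \<V> \<sigma> \<union> closure_sc K \<sigma>"

definition is_path :: "'v set set \<Rightarrow> 'v set set set \<Rightarrow> 'v set list \<Rightarrow> bool" where
  "is_path K \<V> ps \<longleftrightarrow> ps \<noteq> [] \<and> hd ps \<in> K \<and>
     (\<forall>k. Suc k < length ps \<longrightarrow> ps ! Suc k \<in> F_mv K \<V> (ps ! k))"

definition partial_order_pred :: "'p set \<Rightarrow> ('p \<Rightarrow> 'p \<Rightarrow> bool) \<Rightarrow> bool" where
  "partial_order_pred P leP \<longleftrightarrow>
     (\<forall>p\<in>P. leP p p) \<and>
     (\<forall>p\<in>P. \<forall>q\<in>P. leP p q \<and> leP q p \<longrightarrow> p = q) \<and>
     (\<forall>p\<in>P. \<forall>q\<in>P. \<forall>r\<in>P. leP p q \<and> leP q r \<longrightarrow> leP p r)"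

definition linear_extension :: "'p set \<Rightarrow> ('p \<Rightarrow> 'p \<Rightarrow> bool) \<Rightarrow> ('p \<Rightarrow> 'p \<Rightarrow> bool) \<Rightarrow> bool" where
  "linear_extension P leP lin \<longleftrightarrow> partial_order_pred P lin \<and>
     (\<forall>p\<in>P. \<forall>q\<in>P. lin p q \<or> lin q p) \<and>
     (\<forall>p\<in>P. \<forall>q\<in>P. leP p q \<longrightarrow> lin p q)"

definition morse_decomposition ::
  "'v set set \<Rightarrow> 'v set set set \<Rightarrow> 'p set \<Rightarrow> ('p \<Rightarrow> 'p \<Rightarrow> bool) \<Rightarrow> ('p \<Rightarrow> 'v set set) \<Rightarrow> bool" where
  "morse_decomposition K \<V> P leP M \<longleftrightarrow>
     finite P \<and> partial_order_pred P leP \<and>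
     (\<forall>p\<in>P. M p \<subseteq> K) \<and> (\<Union>p\<in>P. M p) = K \<and>
     (\<forall>p\<in>P. \<forall>q\<in>P. p \<noteq> q \<longrightarrow> M p \<inter> M q = {}) \<and>
     (\<forall>ps p q. is_path K \<V> ps \<and> p \<in> P \<and> q \<in> P \<and> hd ps \<in> M p \<and> last ps \<in> M q \<longrightarrow> leP q p)"

definition morse_index :: "'p set \<Rightarrow> ('p \<Rightarrow> 'v set set) \<Rightarrow> 'v set \<Rightarrow> 'p" where
  "morse_index P M \<sigma> = (THE p. p \<in> P \<and> \<sigma> \<in> M p)"

section \<open>Admissible enumerations (0-based lists)\<close>

definition enumeration :: "'v set set \<Rightarrow> 'v set list \<Rightarrow> bool" where
  "enumeration K e \<longleftrightarrow> distinct e \<and> set e = K"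

definition admissible_enum ::
  "'v set set \<Rightarrow> 'p set \<Rightarrow> ('p \<Rightarrow> 'p \<Rightarrow> bool) \<Rightarrow> ('p \<Rightarrow> 'v set set) \<Rightarrow> 'v set list \<Rightarrow> bool" where
  "admissible_enum K P leP M e \<longleftrightarrow> enumeration K e \<and>
     (\<exists>lin. linear_extension P leP lin \<and>
        (\<forall>i j. i \<le> j \<and> j < length e \<longrightarrow>
           lin (morse_index P M (e ! i)) (morse_index P M (e ! j)))) \<and>
     (\<forall>i j. i < length e \<and> j < length e \<and> e ! i \<subset> e ! j \<longrightarrow> i < j)"

definition morse_fixed ::
  "'p set \<Rightarrow> ('p \<Rightarrow> 'v set set) \<Rightarrow> 'v set list \<Rightarrow> 'v set list \<Rightarrow> bool" where
  "morse_fixed P M e e' \<longleftrightarrow>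
     (\<forall>p\<in>P. \<forall>i j i' j'. i < length e \<and> j < length e \<and> i' < length e' \<and> j' < length e' \<and>
        e ! i \<in> M p \<and> e ! j \<in> M p \<and> e ! i = e' ! i' \<and> e ! j = e' ! j' \<longrightarrow>
        (i < j \<longleftrightarrow> i' < j'))"

definition boundary_matrix :: "'v set list \<Rightarrow> bit mat" where
  "boundary_matrix e = mat (length e) (length e)
     (\<lambda>(i, j). if codim1_face (e ! i) (e ! j) then 1 else 0)"

text \<open>m k is the Morse set index of the k-th simplex.\<close>

definition nz_col :: "bit mat \<Rightarrow> nat \<Rightarrow> bool" where
  "nz_col A j \<longleftrightarrow> (\<exists>i < dim_row A. A $$ (i, j) \<noteq> 0)"

definition low :: "bit mat \<Rightarrow> nat \<Rightarrow> nat" where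
  "low A j = Max {i. i < dim_row A \<and> A $$ (i, j) \<noteq> 0}"

definition homogeneous :: "(nat \<Rightarrow> 'p) \<Rightarrow> bit mat \<Rightarrow> nat \<Rightarrow> bool" where
  "homogeneous m A j \<longleftrightarrow> nz_col A j \<and> m j = m (low A j)"

definition targetable :: "(nat \<Rightarrow> 'p) \<Rightarrow> bit mat \<Rightarrow> nat \<Rightarrow> bool" where
  "targetable m A i \<longleftrightarrow> (\<exists>j < dim_col A. homogeneous m A j \<and> low A j = i)"

definition add_col :: "bit mat \<Rightarrow> nat \<Rightarrow> nat \<Rightarrow> bit mat" where
  "add_col A s j = mat (dim_row A) (dim_col A)
     (\<lambda>(r, c). if c = j then A $$ (r, j) + A $$ (r, s) else A $$ (r, c))"

definition conmat_step :: "(nat \<Rightarrow> 'p) \<Rightarrow> nat \<Rightarrow> nat \<Rightarrow> bit mat \<Rightarrow> bit mat" where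
  "conmat_step m j i A =
     (if A $$ (i, j) = 1 \<and> (\<exists>s < j. homogeneous m A s \<and> low A s = i)
      then add_col A (LEAST s. s < j \<and> homogeneous m A s \<and> low A s = i) j
      else A)"

definition conmat_col :: "(nat \<Rightarrow> 'p) \<Rightarrow> nat \<Rightarrow> bit mat \<Rightarrow> bit mat" where
  "conmat_col m j A =
     (if nz_col A j then fold (conmat_step m j) (rev [0..<Suc (low A j)]) A else A)"

definition conmat_reduce :: "(nat \<Rightarrow> 'p) \<Rightarrow> bit mat \<Rightarrow> bit mat" where
  "conmat_reduce m A = fold (conmat_col m) [0..<dim_col A] A"

definition conmat :: "(nat \<Rightarrow> 'p) \<Rightarrow> bit mat \<Rightarrow> bit mat" where
  "conmat m A =
     (let B = conmat_reduce m A;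
          js = sorted_list_of_set
                 {k. k < dim_col A \<and> \<not> homogeneous m B k \<and> \<not> targetable m B k}
      in mat (length js) (length js) (\<lambda>(a, b). B $$ (js ! a, js ! b)))"

definition conmat_of_enum :: "'p set \<Rightarrow> ('p \<Rightarrow> 'v set set) \<Rightarrow> 'v set list \<Rightarrow> bit mat" where
  "conmat_of_enum P M e = conmat (\<lambda>k. morse_index P M (e ! k)) (boundary_matrix e)"

definition permutation_matrix :: "bit mat \<Rightarrow> bool" where
  "permutation_matrix R \<longleftrightarrow> (\<exists>n \<pi>. R \<in> carrier_mat n n \<and> \<pi> permutes {..<n} \<and>
     R = mat n n (\<lambda>(i, j). if i = \<pi> j then 1 else 0))"

end

theory Submission
  imports Defs
begin

lemma bit_add_self[simp]: "x + x = (0::bit)" by (cases x) auto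

lemma bit_eq_iff_add: "((a::bit) = b) \<longleftrightarrow> a + b = 0"
  by (cases a; cases b) auto

lemma sum_symdiff_bit:
  assumes "finite S" "finite T"
  shows "(\<Sum>s\<in>S. f s) + (\<Sum>s\<in>T. f s) = (\<Sum>s\<in>(S - T) \<union> (T - S). (f s :: bit))"
proof -
  have a: "(\<Sum>s\<in>S. f s) = (\<Sum>s\<in>S - T. f s) + (\<Sum>s\<in>S \<inter> T. f s)"
    using assms(1) by (subst sum.union_disjoint[symmetric]) (auto intro: sum.cong)
  have b: "(\<Sum>s\<in>T. f s) = (\<Sum>s\<in>T - S. f s) + (\<Sum>s\<in>S \<inter> T. f s)"
    using assms(2) by (subst sum.union_disjoint[symmetric]) (auto intro: sum.cong)
  have c: "(\<Sum>s\<in>(S - T) \<union> (T - S). f s) = (\<Sum>s\<in>S - T. f s) + (\<Sum>s\<in>T - S. f s)"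
    using assms by (intro sum.union_disjoint) auto
  have d: "\<And>x y z. (x + z) + (y + z) = x + (y::bit)" by (case_tac x; case_tac y; case_tac z) auto
  show ?thesis unfolding a b c d ..
qed

lemma low_props:
  assumes "nz_col A j"
  shows "low A j < dim_row A" "A $$ (low A j, j) = 1"
    "\<And>i. i < dim_row A \<Longrightarrow> A $$ (i, j) \<noteq> 0 \<Longrightarrow> i \<le> low A j"
proof -
  let ?Z = "{i. i < dim_row A \<and> A $$ (i, j) \<noteq> 0}"
  have f: "finite ?Z" by simp
  have ne: "?Z \<noteq> {}" using assms unfolding nz_col_def by auto
  have "low A j \<in> ?Z" unfolding low_def using Max_in[OF f ne] .
  then show "low A j < dim_row A" "A $$ (low A j, j) = 1" by auto
  show "\<And>i. i < dim_row A \<Longrightarrow> A $$ (i, j) \<noteq> 0 \<Longrightarrow> i \<le> low A j"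
    unfolding low_def using f by (intro Max_ge) auto
qed

lemma low_above_zero:
  assumes "nz_col A j" "low A j < i" "i < dim_row A"
  shows "A $$ (i, j) = 0"
  using low_props(3)[OF assms(1) assms(3)] assms(2) by fastforce

lemma col_eq_props:
  assumes "dim_row X = dim_row Y" "\<And>i. i < dim_row X \<Longrightarrow> X $$ (i, s) = Y $$ (i, s)"
  shows "nz_col X s = nz_col Y s" "low X s = low Y s"
    "homogeneous m X s = homogeneous m Y s"
proof -
  show 1: "nz_col X s = nz_col Y s" unfolding nz_col_def using assms by auto
  have "{i. i < dim_row X \<and> X $$ (i, s) \<noteq> 0} = {i. i < dim_row Y \<and> Y $$ (i, s) \<noteq> 0}"
    using assms by auto
  then show 2: "low X s = low Y s" unfolding low_def by simp
  show "homogeneous m X s = homogeneous m Y s" unfolding homogeneous_def using 1 2 by simp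
qed

lemma add_col_index:
  assumes "r < dim_row C" "c < dim_col C"
  shows "add_col C s j $$ (r, c) = (if c = j then C $$ (r, j) + C $$ (r, s) else C $$ (r, c))"
  using assms unfolding add_col_def by simp

lemma add_col_dims[simp]: "dim_row (add_col C s j) = dim_row C" "dim_col (add_col C s j) = dim_col C"
  unfolding add_col_def by simp_all

definition ctx_ok :: "nat \<Rightarrow> (nat \<Rightarrow> 'p) \<Rightarrow> ('p \<Rightarrow> 'p \<Rightarrow> bool) \<Rightarrow> bit mat \<Rightarrow> nat \<Rightarrow> bool" where
  "ctx_ok n m R X j \<longleftrightarrow> X \<in> carrier_mat n n \<and> j < n \<and>
     (\<forall>s<j. \<forall>r<n. X $$ (r, s) \<noteq> 0 \<longrightarrow> R (m r) (m s)) \<and>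
     (\<forall>a b c. a < n \<longrightarrow> b < n \<longrightarrow> c < n \<longrightarrow> R (m a) (m b) \<longrightarrow> R (m b) (m c) \<longrightarrow> R (m a) (m c))"

definition inv_in :: "nat \<Rightarrow> (nat \<Rightarrow> 'p) \<Rightarrow> ('p \<Rightarrow> 'p \<Rightarrow> bool) \<Rightarrow> bit mat \<Rightarrow> nat \<Rightarrow> nat \<Rightarrow> bit mat \<Rightarrow> bool" where
  "inv_in n m R X j t C \<longleftrightarrow> C \<in> carrier_mat n n \<and>
     (\<forall>r<n. \<forall>c<n. c \<noteq> j \<longrightarrow> C $$ (r, c) = X $$ (r, c)) \<and>
     (\<forall>r<n. C $$ (r, j) \<noteq> 0 \<longrightarrow> R (m r) (m j)) \<and>
     (\<exists>S. finite S \<and> S \<subseteq> {s. s < j \<and> homogeneous m X s \<and> R (m s) (m j)} \<and>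
        (\<forall>r<n. C $$ (r, j) = X $$ (r, j) + (\<Sum>s\<in>S. X $$ (r, s)))) \<and>
     (\<forall>s<j. homogeneous m X s \<and> t \<le> low X s \<longrightarrow> C $$ (low X s, j) = 0)"

lemma step_inv:
  assumes ctx: "ctx_ok n m R X j" and inv: "inv_in n m R X j (Suc i) C" and i: "i < n"
  shows "inv_in n m R X j i (conmat_step m j i C)"
proof -
  from ctx have X: "X \<in> carrier_mat n n" and j: "j < n"
    and suppX: "\<And>s r. s < j \<Longrightarrow> r < n \<Longrightarrow> X $$ (r, s) \<noteq> 0 \<Longrightarrow> R (m r) (m s)"
    and tr: "\<And>a b c. a < n \<Longrightarrow> b < n \<Longrightarrow> c < n \<Longrightarrow> R (m a) (m b) \<Longrightarrow> R (m b) (m c) \<Longrightarrow> R (m a) (m c)"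
    unfolding ctx_ok_def by blast+
  from inv have C: "C \<in> carrier_mat n n"
    and cols: "\<And>r c. r < n \<Longrightarrow> c < n \<Longrightarrow> c \<noteq> j \<Longrightarrow> C $$ (r, c) = X $$ (r, c)"
    and suppC: "\<And>r. r < n \<Longrightarrow> C $$ (r, j) \<noteq> 0 \<Longrightarrow> R (m r) (m j)"
    and zero: "\<And>s. s < j \<Longrightarrow> homogeneous m X s \<Longrightarrow> Suc i \<le> low X s \<Longrightarrow> C $$ (low X s, j) = 0"
    unfolding inv_in_def by blast+
  from inv obtain S where S: "finite S" "S \<subseteq> {s. s < j \<and> homogeneous m X s \<and> R (m s) (m j)}"
    and Seq: "\<And>r. r < n \<Longrightarrow> C $$ (r, j) = X $$ (r, j) + (\<Sum>s\<in>S. X $$ (r, s))"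
    unfolding inv_in_def by blast
  have same: "homogeneous m C s = homogeneous m X s \<and> low C s = low X s" if "s < j" for s
  proof -
    have "dim_row C = dim_row X" using C X by simp
    moreover have "\<And>r. r < dim_row C \<Longrightarrow> C $$ (r, s) = X $$ (r, s)"
      using cols that j C by auto
    ultimately show ?thesis using col_eq_props by metis
  qed
  have lowX: "low X s < n" "X $$ (low X s, s) = 1" if "homogeneous m X s" for s
    using low_props[of X s] that X unfolding homogeneous_def by auto
  show ?thesis
  proof (cases "C $$ (i, j) = 1 \<and> (\<exists>s < j. homogeneous m C s \<and> low C s = i)")
    case True
    define s0 where "s0 = (LEAST s. s < j \<and> homogeneous m C s \<and> low C s = i)"
    have s0: "s0 < j \<and> homogeneous m C s0 \<and> low C s0 = i"
      unfolding s0_def using True by (metis (mono_tags, lifting) LeastI_ex)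
    have s0X: "homogeneous m X s0" "low X s0 = i" using s0 same by auto
    have Cij: "C $$ (i, j) = 1" using True by simp
    have step: "conmat_step m j i C = add_col C s0 j"
      unfolding conmat_step_def s0_def using True by simp
    let ?C = "add_col C s0 j"
    have ent: "?C $$ (r, j) = C $$ (r, j) + X $$ (r, s0)" if "r < n" for r
      using add_col_index[of r C j s0 j] that C j cols[of r s0] s0 by auto
    have ms0: "m s0 = m i" using s0X unfolding homogeneous_def by simp
    have Rs0: "R (m s0) (m j)" using suppC[OF i] Cij ms0 by simp
    have "inv_in n m R X j i ?C"
      unfolding inv_in_def
    proof (intro conjI allI impI)
      show "?C \<in> carrier_mat n n" using C by auto
    next
      fix r c assume "r < n" "c < n" "c \<noteq> j"
      then show "?C $$ (r, c) = X $$ (r, c)" using add_col_index[of r C c s0 j] C cols by auto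
    next
      fix r assume r: "r < n" and nz: "?C $$ (r, j) \<noteq> 0"
      show "R (m r) (m j)"
      proof (cases "C $$ (r, j) = 0")
        case True
        then have "X $$ (r, s0) \<noteq> 0" using nz ent[OF r] by simp
        then have "R (m r) (m s0)" using suppX s0 r by blast
        then show ?thesis using tr[OF r, of s0 j] Rs0 s0 j by linarith
      next
        case False
        then show ?thesis using suppC r by blast
      qed
    next
      show "\<exists>S. finite S \<and> S \<subseteq> {s. s < j \<and> homogeneous m X s \<and> R (m s) (m j)} \<and>
        (\<forall>r<n. ?C $$ (r, j) = X $$ (r, j) + (\<Sum>s\<in>S. X $$ (r, s)))"
      proof (intro exI conjI allI impI)
        show "finite ((S - {s0}) \<union> ({s0} - S))" using S by simp
        show "(S - {s0}) \<union> ({s0} - S) \<subseteq> {s. s < j \<and> homogeneous m X s \<and> R (m s) (m j)}"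
          using S s0 s0X Rs0 by auto
        fix r assume r: "r < n"
        have "?C $$ (r, j) = X $$ (r, j) + ((\<Sum>s\<in>S. X $$ (r, s)) + (\<Sum>s\<in>{s0}. X $$ (r, s)))"
          by (simp only: ent[OF r] Seq[OF r] sum.insert finite.emptyI empty_iff not_False_eq_True sum.empty add_0_right add.assoc)
        also have "\<dots> = X $$ (r, j) + (\<Sum>s\<in>(S - {s0}) \<union> ({s0} - S). X $$ (r, s))"
          using sum_symdiff_bit[OF S(1) finite.insertI[OF finite.emptyI], of "\<lambda>s. X $$ (r, s)" s0] by (simp only:)
        finally show "?C $$ (r, j) = X $$ (r, j) + (\<Sum>s\<in>(S - {s0}) \<union> ({s0} - S). X $$ (r, s))" .
      qed
    next
      fix s assume s: "s < j" and h: "homogeneous m X s \<and> i \<le> low X s"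
      show "?C $$ (low X s, j) = 0"
      proof (cases "low X s = i")
        case True
        then show ?thesis using ent[OF i] Cij lowX[of s0] s0X by simp
      next
        case False
        then have gt: "i < low X s" using h by simp
        have l: "low X s < n" using lowX h by blast
        have "X $$ (low X s, s0) = 0"
          using low_above_zero[of X s0 "low X s"] s0X gt l X unfolding homogeneous_def by simp
        moreover have "C $$ (low X s, j) = 0" using zero[OF s] h gt by simp
        ultimately show ?thesis using ent[OF l] by simp
      qed
    qed
    then show ?thesis using step by simp
  next
    case False
    then have step: "conmat_step m j i C = C" unfolding conmat_step_def by auto
    have "inv_in n m R X j i C"
      unfolding inv_in_def
    proof (intro conjI allI impI)
      fix s assume s: "s < j" and h: "homogeneous m X s \<and> i \<le> low X s"
      show "C $$ (low X s, j) = 0"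
      proof (cases "low X s = i")
        case True
        then have "\<exists>s < j. homogeneous m C s \<and> low C s = i" using s h same by blast
        then have "C $$ (i, j) \<noteq> 1" using False by blast
        then show ?thesis using True by simp
      next
        case False
        then show ?thesis using zero[OF s] h by simp
      qed
    qed (use inv in \<open>auto simp: inv_in_def\<close>)
    then show ?thesis using step by simp
  qed
qed

lemma loop_inv:
  assumes ctx: "ctx_ok n m R X j"
  shows "t \<le> n \<Longrightarrow> inv_in n m R X j t C \<Longrightarrow> inv_in n m R X j 0 (fold (conmat_step m j) (rev [0..<t]) C)"
proof (induction t arbitrary: C)
  case 0
  then show ?case by simp
next
  case (Suc t)
  have "inv_in n m R X j t (conmat_step m j t C)"
    using step_inv[OF ctx Suc.prems(2)] Suc.prems(1) by simp
  then have "inv_in n m R X j 0 (fold (conmat_step m j) (rev [0..<t]) (conmat_step m j t C))"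
    using Suc.IH Suc.prems(1) by simp
  then show ?case by simp
qed

lemma col_inv:
  assumes ctx: "ctx_ok n m R X j" and suppj: "\<forall>r<n. X $$ (r, j) \<noteq> 0 \<longrightarrow> R (m r) (m j)"
  shows "inv_in n m R X j 0 (conmat_col m j X)"
proof -
  from ctx have X: "X \<in> carrier_mat n n" and j: "j < n" unfolding ctx_ok_def by auto
  have S0: "\<exists>S. finite S \<and> S \<subseteq> {s. s < j \<and> homogeneous m X s \<and> R (m s) (m j)} \<and>
        (\<forall>r<n. X $$ (r, j) = X $$ (r, j) + (\<Sum>s\<in>S. X $$ (r, s)))"
    by (rule exI[of _ "{}"]) (simp only: sum.empty add_0_right finite.emptyI empty_subsetI simp_thms)
  show ?thesis
  proof (cases "nz_col X j")
    case True
    let ?L = "low X j"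
    have L: "?L < n" using low_props(1)[OF True] X by simp
    have "inv_in n m R X j (Suc ?L) X"
      unfolding inv_in_def
    proof (intro conjI allI impI S0)
      fix s assume s: "s < j" and h: "homogeneous m X s \<and> Suc ?L \<le> low X s"
      have "low X s < n" using h low_props(1)[of X s] X unfolding homogeneous_def by simp
      then show "X $$ (low X s, j) = 0" using low_above_zero[OF True] h X by simp
    qed (use X suppj in auto)
    then show ?thesis using loop_inv[OF ctx, of "Suc ?L" X] L True unfolding conmat_col_def by simp
  next
    case False
    have "inv_in n m R X j 0 X"
      unfolding inv_in_def
    proof (intro conjI allI impI S0)
      fix s assume s: "s < j" and h: "homogeneous m X s \<and> 0 \<le> low X s"
      have "low X s < n" using h low_props(1)[of X s] X unfolding homogeneous_def by simp
      then show "X $$ (low X s, j) = 0" using False X unfolding nz_col_def by auto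
    qed (use X suppj in auto)
    then show ?thesis using False unfolding conmat_col_def by simp
  qed
qed

definition red_ok :: "nat \<Rightarrow> (nat \<Rightarrow> 'p) \<Rightarrow> ('p \<Rightarrow> 'p \<Rightarrow> bool) \<Rightarrow> bit mat \<Rightarrow> nat \<Rightarrow> bit mat \<Rightarrow> bool" where
  "red_ok n m R A k B \<longleftrightarrow> B \<in> carrier_mat n n \<and>
     (\<forall>r<n. \<forall>c<n. k \<le> c \<longrightarrow> B $$ (r, c) = A $$ (r, c)) \<and>
     (\<forall>j<k. (\<forall>r<n. B $$ (r, j) \<noteq> 0 \<longrightarrow> R (m r) (m j)) \<and>
        (\<exists>S. finite S \<and> S \<subseteq> {s. s < j \<and> homogeneous m B s \<and> R (m s) (m j)} \<and>
          (\<forall>r<n. B $$ (r, j) = A $$ (r, j) + (\<Sum>s\<in>S. B $$ (r, s)))) \<and>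
        (\<forall>s<j. homogeneous m B s \<longrightarrow> B $$ (low B s, j) = 0))"

lemma red_step:
  assumes A: "A \<in> carrier_mat n n"
    and suppA: "\<forall>i<n. \<forall>j<n. A $$ (i, j) \<noteq> 0 \<longrightarrow> R (m i) (m j)"
    and tr: "\<forall>a b c. a < n \<longrightarrow> b < n \<longrightarrow> c < n \<longrightarrow> R (m a) (m b) \<longrightarrow> R (m b) (m c) \<longrightarrow> R (m a) (m c)"
    and red: "red_ok n m R A k B" and k: "k < n"
  shows "red_ok n m R A (Suc k) (conmat_col m k B)"
proof -
  let ?Y = "conmat_col m k B"
  from red have B: "B \<in> carrier_mat n n"
    and colsA: "\<And>r c. r < n \<Longrightarrow> c < n \<Longrightarrow> k \<le> c \<Longrightarrow> B $$ (r, c) = A $$ (r, c)"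
    and old: "\<And>j. j < k \<Longrightarrow> (\<forall>r<n. B $$ (r, j) \<noteq> 0 \<longrightarrow> R (m r) (m j)) \<and>
        (\<exists>S. finite S \<and> S \<subseteq> {s. s < j \<and> homogeneous m B s \<and> R (m s) (m j)} \<and>
          (\<forall>r<n. B $$ (r, j) = A $$ (r, j) + (\<Sum>s\<in>S. B $$ (r, s)))) \<and>
        (\<forall>s<j. homogeneous m B s \<longrightarrow> B $$ (low B s, j) = 0)"
    unfolding red_ok_def by blast+
  have ctx: "ctx_ok n m R B k"
    unfolding ctx_ok_def using B k tr old by blast
  have suppk: "\<forall>r<n. B $$ (r, k) \<noteq> 0 \<longrightarrow> R (m r) (m k)"
    using colsA suppA k by simp
  have inv: "inv_in n m R B k 0 ?Y" using col_inv[OF ctx suppk] .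
  from inv have Y: "?Y \<in> carrier_mat n n"
    and cols: "\<And>r c. r < n \<Longrightarrow> c < n \<Longrightarrow> c \<noteq> k \<Longrightarrow> ?Y $$ (r, c) = B $$ (r, c)"
    and suppY: "\<forall>r<n. ?Y $$ (r, k) \<noteq> 0 \<longrightarrow> R (m r) (m k)"
    and zero: "\<And>s. s < k \<Longrightarrow> homogeneous m B s \<Longrightarrow> ?Y $$ (low B s, k) = 0"
    unfolding inv_in_def by blast+
  from inv obtain S where S: "finite S" "S \<subseteq> {s. s < k \<and> homogeneous m B s \<and> R (m s) (m k)}"
    and Seq: "\<And>r. r < n \<Longrightarrow> ?Y $$ (r, k) = B $$ (r, k) + (\<Sum>s\<in>S. B $$ (r, s))"
    unfolding inv_in_def by blast
  have same: "homogeneous m ?Y s = homogeneous m B s \<and> low ?Y s = low B s" if "s < n" "s \<noteq> k" for s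
  proof -
    have "dim_row ?Y = dim_row B" using Y B by simp
    moreover have "\<And>r. r < dim_row ?Y \<Longrightarrow> ?Y $$ (r, s) = B $$ (r, s)"
      using cols that Y by auto
    ultimately show ?thesis using col_eq_props by metis
  qed
  show ?thesis
    unfolding red_ok_def
  proof (intro conjI allI impI)
    show "?Y \<in> carrier_mat n n" using Y .
  next
    fix r c assume "r < n" "c < n" "Suc k \<le> c"
    then show "?Y $$ (r, c) = A $$ (r, c)" using cols colsA by simp
  next
    fix j r assume j: "j < Suc k" and r: "r < n" and nz: "?Y $$ (r, j) \<noteq> 0"
    show "R (m r) (m j)"
    proof (cases "j = k")
      case True then show ?thesis using suppY r nz by simp
    next
      case False
      then have "j < k" using j by simp
      then show ?thesis using old cols[OF r, of j] nz r k False by auto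
    qed
  next
    fix j assume j: "j < Suc k"
    show "\<exists>S. finite S \<and> S \<subseteq> {s. s < j \<and> homogeneous m ?Y s \<and> R (m s) (m j)} \<and>
          (\<forall>r<n. ?Y $$ (r, j) = A $$ (r, j) + (\<Sum>s\<in>S. ?Y $$ (r, s)))"
    proof (cases "j = k")
      case True
      show ?thesis
      proof (intro exI conjI allI impI)
        show "finite S" using S(1) .
        show "S \<subseteq> {s. s < j \<and> homogeneous m ?Y s \<and> R (m s) (m j)}"
          using S(2) same k True by auto
        fix r assume r: "r < n"
        have "(\<Sum>s\<in>S. B $$ (r, s)) = (\<Sum>s\<in>S. ?Y $$ (r, s))"
          by (rule sum.cong[OF refl]) (use S(2) cols[OF r] k in auto)
        then show "?Y $$ (r, j) = A $$ (r, j) + (\<Sum>s\<in>S. ?Y $$ (r, s))"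
          using Seq[OF r] colsA[OF r k] True by (simp only: order_refl)
      qed
    next
      case False
      then have jk: "j < k" using j by simp
      from old[OF jk] obtain T where T: "finite T" "T \<subseteq> {s. s < j \<and> homogeneous m B s \<and> R (m s) (m j)}"
        and Teq: "\<And>r. r < n \<Longrightarrow> B $$ (r, j) = A $$ (r, j) + (\<Sum>s\<in>T. B $$ (r, s))"
        by blast
      show ?thesis
      proof (intro exI conjI allI impI)
        show "finite T" using T(1) .
        show "T \<subseteq> {s. s < j \<and> homogeneous m ?Y s \<and> R (m s) (m j)}"
          using T(2) same k jk by auto
        fix r assume r: "r < n"
        have "(\<Sum>s\<in>T. B $$ (r, s)) = (\<Sum>s\<in>T. ?Y $$ (r, s))"
          by (rule sum.cong[OF refl]) (use T(2) cols[OF r] k jk in auto)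
        moreover have "?Y $$ (r, j) = B $$ (r, j)" using cols[OF r, of j] jk k by simp
        ultimately show "?Y $$ (r, j) = A $$ (r, j) + (\<Sum>s\<in>T. ?Y $$ (r, s))"
          using Teq[OF r] by (simp only:)
      qed
    qed
  next
    fix j s assume j: "j < Suc k" and s: "s < j" and h: "homogeneous m ?Y s"
    have sk: "s < k" "s \<noteq> k" using s j by auto
    then have hB: "homogeneous m B s" and lw: "low ?Y s = low B s" using same[of s] h k by auto
    have lown: "low B s < n" using hB low_props(1)[of B s] B unfolding homogeneous_def by simp
    show "?Y $$ (low ?Y s, j) = 0"
    proof (cases "j = k")
      case True then show ?thesis using zero[OF sk(1) hB] lw by simp
    next
      case False
      then have jk: "j < k" using j by simp
      have "B $$ (low B s, j) = 0" using old[OF jk] s hB by blast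
      then show ?thesis using cols[OF lown, of j] jk k lw by simp
    qed
  qed
qed

lemma reduce_ok:
  assumes A: "A \<in> carrier_mat n n"
    and suppA: "\<forall>i<n. \<forall>j<n. A $$ (i, j) \<noteq> 0 \<longrightarrow> R (m i) (m j)"
    and tr: "\<forall>a b c. a < n \<longrightarrow> b < n \<longrightarrow> c < n \<longrightarrow> R (m a) (m b) \<longrightarrow> R (m b) (m c) \<longrightarrow> R (m a) (m c)"
  shows "red_ok n m R A n (conmat_reduce m A)"
proof -
  have "k \<le> n \<Longrightarrow> red_ok n m R A k (fold (conmat_col m) [0..<k] A)" for k
  proof (induction k)
    case 0
    then show ?case using A unfolding red_ok_def by simp
  next
    case (Suc k)
    then show ?case using red_step[where m=m and R=R and n=n and A=A, OF A suppA tr, of k] by simp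
  qed
  then show ?thesis unfolding conmat_reduce_def using A by simp
qed

lemma bit_cancel2: "(z + x) + (z + y) = x + (y::bit)"
  by (cases x; cases y; cases z) auto

lemma red_distinct_low:
  assumes red: "red_ok n m R A n B" and "s1 < s2" "s2 < n"
    and "homogeneous m B s1" "homogeneous m B s2"
  shows "low B s1 \<noteq> low B s2"
proof -
  have B: "B \<in> carrier_mat n n" using red unfolding red_ok_def by blast
  have "\<forall>s<s2. homogeneous m B s \<longrightarrow> B $$ (low B s, s2) = 0"
    using red assms(3) unfolding red_ok_def by (elim conjE allE[of _ s2]) simp
  then have "B $$ (low B s1, s2) = 0" using assms(2,4) by simp
  moreover have "B $$ (low B s2, s2) = 1" using low_props(2)[of B s2] assms(5) unfolding homogeneous_def by simp
  ultimately show ?thesis by auto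
qed

lemma unique_col:
  assumes red: "red_ok n m R A n B" and j: "j < n"
    and T: "finite T" "T \<subseteq> {s. s < j \<and> homogeneous m B s}"
    and w: "\<And>r. r < n \<Longrightarrow> w r = A $$ (r, j) + (\<Sum>s\<in>T. B $$ (r, s))"
    and wz: "\<And>s. s < j \<Longrightarrow> homogeneous m B s \<Longrightarrow> w (low B s) = 0"
    and r: "r < n"
  shows "w r = B $$ (r, j)"
proof -
  have B: "B \<in> carrier_mat n n" using red unfolding red_ok_def by blast
  from red j obtain S where S: "finite S" "S \<subseteq> {s. s < j \<and> homogeneous m B s \<and> R (m s) (m j)}"
    and Seq: "\<And>r. r < n \<Longrightarrow> B $$ (r, j) = A $$ (r, j) + (\<Sum>s\<in>S. B $$ (r, s))"
    and Bz: "\<And>s. s < j \<Longrightarrow> homogeneous m B s \<Longrightarrow> B $$ (low B s, j) = 0"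
    unfolding red_ok_def by (elim conjE allE[of _ j]) (simp, blast)
  define U where "U = (T - S) \<union> (S - T)"
  have Ufin: "finite U" using S T unfolding U_def by simp
  have Usub: "U \<subseteq> {s. s < j \<and> homogeneous m B s}" using S T unfolding U_def by auto
  have d: "w q + B $$ (q, j) = (\<Sum>s\<in>U. B $$ (q, s))" if q: "q < n" for q
  proof -
    have "w q + B $$ (q, j) = (\<Sum>s\<in>T. B $$ (q, s)) + (\<Sum>s\<in>S. B $$ (q, s))"
      by (simp only: w[OF q] Seq[OF q] bit_cancel2)
    also have "\<dots> = (\<Sum>s\<in>U. B $$ (q, s))" unfolding U_def by (rule sum_symdiff_bit[OF T(1) S(1)])
    finally show ?thesis .
  qed
  have "U = {}"
  proof (rule ccontr)
    assume ne: "U \<noteq> {}"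
    define l0 where "l0 = Max (low B ` U)"
    have "l0 \<in> low B ` U" unfolding l0_def using Ufin ne by simp
    then obtain s0 where s0: "s0 \<in> U" "low B s0 = l0" by auto
    have hs0: "homogeneous m B s0" "s0 < j" using s0 Usub by auto
    have l0n: "l0 < n" using s0 hs0 low_props(1)[of B s0] B unfolding homogeneous_def by simp
    have others: "B $$ (l0, s) = 0" if s: "s \<in> U - {s0}" for s
    proof -
      have hs: "homogeneous m B s" "s < j" using s Usub by auto
      have le: "low B s \<le> l0" unfolding l0_def using Ufin s by simp
      have "low B s \<noteq> low B s0"
      proof (cases "s < s0")
        case True then show ?thesis using red_distinct_low[OF red True] hs0 hs j by simp
      next
        case False
        then have "s0 < s" using s by auto
        then show ?thesis using red_distinct_low[OF red \<open>s0 < s\<close>] hs0 hs j by simp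
      qed
      then have "low B s < l0" using le s0 by simp
      then show ?thesis using low_above_zero[of B s l0] hs l0n B unfolding homogeneous_def by simp
    qed
    have "(\<Sum>s\<in>U. B $$ (l0, s)) = B $$ (l0, s0) + (\<Sum>s\<in>U - {s0}. B $$ (l0, s))"
      by (rule sum.remove[OF Ufin s0(1)])
    also have "(\<Sum>s\<in>U - {s0}. B $$ (l0, s)) = 0" using others by simp
    also have "B $$ (l0, s0) = 1" using low_props(2)[of B s0] hs0 s0 unfolding homogeneous_def by simp
    finally have "(\<Sum>s\<in>U. B $$ (l0, s)) = 1" by simp
    moreover have "w l0 + B $$ (l0, j) = 0" using wz[OF hs0(2) hs0(1)] Bz[OF hs0(2) hs0(1)] s0 by simp
    ultimately show False using d[OF l0n] by simp
  qed
  then have "w r + B $$ (r, j) = 0" using d[OF r] by simp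
  then show ?thesis using bit_eq_iff_add by blast
qed

lemma homog_transfer:
  assumes X: "dim_row X = n" and Y: "dim_row Y = n"
    and g: "\<And>i. i < n \<Longrightarrow> g i < n" and h: "\<And>i. i < n \<Longrightarrow> h i < n \<and> g (h i) = i"
    and colYX: "\<And>i. i < n \<Longrightarrow> Y $$ (i, t) = X $$ (g i, s)"
    and supp: "\<And>r. r < n \<Longrightarrow> X $$ (r, s) \<noteq> 0 \<Longrightarrow> R (mX r) (mX s)"
    and mY: "\<And>i. i < n \<Longrightarrow> mY i = mX (g i)" and mt: "mY t = mX s"
    and OPY: "\<And>i j. i < n \<Longrightarrow> j < n \<Longrightarrow> R (mY i) (mY j) \<Longrightarrow> mY i \<noteq> mY j \<Longrightarrow> i < j"
    and fixY: "\<And>i j. i < n \<Longrightarrow> j < n \<Longrightarrow> mY i = mY j \<Longrightarrow> (g i < g j \<longleftrightarrow> i < j)"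
    and hom: "homogeneous mX X s"
  shows "homogeneous mY Y t \<and> g (low Y t) = low X s"
proof -
  let ?a = "low X s"
  have nzX: "nz_col X s" using hom unfolding homogeneous_def by simp
  have a: "?a < n" "X $$ (?a, s) = 1" using low_props[OF nzX] X by auto
  have ma: "mX ?a = mX s" using hom unfolding homogeneous_def by simp
  define a' where "a' = h ?a"
  have a': "a' < n" "g a' = ?a" using h[OF a(1)] unfolding a'_def by auto
  have Ya: "Y $$ (a', t) = 1" using colYX[OF a'(1)] a' a by simp
  have nzY: "nz_col Y t" unfolding nz_col_def using Ya a' Y by auto
  have ma': "mY a' = mX s" using mY[OF a'(1)] a' ma by simp
  have bound: "i \<le> a'" if i: "i < n" "Y $$ (i, t) \<noteq> 0" for i
  proof -
    have "X $$ (g i, s) \<noteq> 0" using colYX[OF i(1)] i by simp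
    then have R1: "R (mY i) (mY a')" using supp[OF g[OF i(1)]] mY[OF i(1)] ma' by simp
    have gi: "g i \<le> ?a" using low_props(3)[OF nzX, of "g i"] X g[OF i(1)] \<open>X $$ (g i, s) \<noteq> 0\<close> by simp
    show ?thesis
    proof (cases "mY i = mY a'")
      case True
      then show ?thesis using fixY[OF a'(1) i(1)] gi a' by (simp add: not_less[symmetric])
    next
      case False
      then show ?thesis using OPY[OF i(1) a'(1) R1] by simp
    qed
  qed
  have lowY: "low Y t = a'"
  proof (rule antisym)
    show "low Y t \<le> a'" using bound low_props(1,2)[OF nzY] Y by simp
    show "a' \<le> low Y t" using low_props(3)[OF nzY, of a'] Y a' Ya by simp
  qed
  show ?thesis unfolding homogeneous_def using nzY lowY ma' mt a' by simp
qed

lemma reduce_perm: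
  assumes A: "A \<in> carrier_mat n n" and A': "A' \<in> carrier_mat n n"
    and pi: "\<And>i. i < n \<Longrightarrow> \<pi> i < n" and psi: "\<And>i. i < n \<Longrightarrow> \<psi> i < n"
    and pp: "\<And>i. i < n \<Longrightarrow> \<psi> (\<pi> i) = i" and pp': "\<And>i. i < n \<Longrightarrow> \<pi> (\<psi> i) = i"
    and AA': "\<And>i j. i < n \<Longrightarrow> j < n \<Longrightarrow> A' $$ (i, j) = A $$ (\<pi> i, \<pi> j)"
    and mm': "\<And>i. i < n \<Longrightarrow> m' i = m (\<pi> i)"
    and suppA: "\<And>i j. i < n \<Longrightarrow> j < n \<Longrightarrow> A $$ (i, j) \<noteq> 0 \<Longrightarrow> R (m i) (m j)"
    and tr: "\<And>a b c. a < n \<Longrightarrow> b < n \<Longrightarrow> c < n \<Longrightarrow> R (m a) (m b) \<Longrightarrow> R (m b) (m c) \<Longrightarrow> R (m a) (m c)"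
    and OP: "\<And>i j. i < n \<Longrightarrow> j < n \<Longrightarrow> R (m i) (m j) \<Longrightarrow> m i \<noteq> m j \<Longrightarrow> i < j"
    and OP': "\<And>i j. i < n \<Longrightarrow> j < n \<Longrightarrow> R (m' i) (m' j) \<Longrightarrow> m' i \<noteq> m' j \<Longrightarrow> i < j"
    and fx: "\<And>i j. i < n \<Longrightarrow> j < n \<Longrightarrow> m' i = m' j \<Longrightarrow> (\<pi> i < \<pi> j \<longleftrightarrow> i < j)"
  shows "\<And>i j. i < n \<Longrightarrow> j < n \<Longrightarrow> conmat_reduce m' A' $$ (i, j) = conmat_reduce m A $$ (\<pi> i, \<pi> j)"
proof -
  define B where "B = conmat_reduce m A"
  define B' where "B' = conmat_reduce m' A'"
  have redB: "red_ok n m R A n B" unfolding B_def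
    by (rule reduce_ok) (use A suppA tr in blast)+
  have redB': "red_ok n m' R A' n B'" unfolding B'_def
  proof (rule reduce_ok)
    show "A' \<in> carrier_mat n n" by fact
    show "\<forall>i<n. \<forall>j<n. A' $$ (i, j) \<noteq> 0 \<longrightarrow> R (m' i) (m' j)"
      using AA' suppA mm' pi by simp
    show "\<forall>a b c. a < n \<longrightarrow> b < n \<longrightarrow> c < n \<longrightarrow> R (m' a) (m' b) \<longrightarrow> R (m' b) (m' c) \<longrightarrow> R (m' a) (m' c)"
    proof (intro allI impI)
    fix a b c assume abc: "a < n" "b < n" "c < n" and r1: "R (m' a) (m' b)" and r2: "R (m' b) (m' c)"
    show "R (m' a) (m' c)" using tr[OF pi[OF abc(1)] pi[OF abc(2)] pi[OF abc(3)]] r1 r2 mm' abc by simp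
  qed
  qed
  have Bc: "B \<in> carrier_mat n n" using redB unfolding red_ok_def by blast
  have Bc': "B' \<in> carrier_mat n n" using redB' unfolding red_ok_def by blast
  have suppB: "\<And>r j. r < n \<Longrightarrow> j < n \<Longrightarrow> B $$ (r, j) \<noteq> 0 \<Longrightarrow> R (m r) (m j)"
    using redB unfolding red_ok_def by blast
  have suppB': "\<And>r j. r < n \<Longrightarrow> j < n \<Longrightarrow> B' $$ (r, j) \<noteq> 0 \<Longrightarrow> R (m' r) (m' j)"
    using redB' unfolding red_ok_def by blast
  have fixinv: "(\<psi> i < \<psi> j \<longleftrightarrow> i < j)" if i: "i < n" and j: "j < n" and eq: "m i = m j" for i j
  proof -
    have "m' (\<psi> i) = m' (\<psi> j)" using mm'[OF psi[OF i]] mm'[OF psi[OF j]] pp'[OF i] pp'[OF j] eq by simp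
    from fx[OF psi[OF i] psi[OF j] this] show ?thesis using pp'[OF i] pp'[OF j] by simp
  qed
  have claim: "\<forall>j'<n. \<pi> j' = k \<longrightarrow> (\<forall>i<n. B' $$ (i, j') = B $$ (\<pi> i, k))" for k
  proof (induction k rule: less_induct)
    case (less j)
    show ?case
    proof (intro allI impI)
      fix j' i assume j': "j' < n" "\<pi> j' = j" and i: "i < n"
      have jn: "j < n" using pi j' by blast
      have IH: "\<And>s' r. s' < n \<Longrightarrow> \<pi> s' < j \<Longrightarrow> r < n \<Longrightarrow> B' $$ (r, s') = B $$ (\<pi> r, \<pi> s')"
        using less by blast
      have HT1: "homogeneous m' B' s' \<and> \<pi> (low B' s') = low B (\<pi> s')"
        if s': "s' < n" "\<pi> s' < j" "homogeneous m B (\<pi> s')" for s'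
      proof (rule homog_transfer[where X=B and Y=B' and g=\<pi> and h=\<psi> and mX=m and mY=m' and R=R and n=n])
        show "dim_row B = n" "dim_row B' = n" using Bc Bc' by auto
        show "\<And>i. i < n \<Longrightarrow> \<pi> i < n" by (rule pi)
        show "\<And>i. i < n \<Longrightarrow> \<psi> i < n \<and> \<pi> (\<psi> i) = i" using psi pp' by blast
        show "\<And>i. i < n \<Longrightarrow> B' $$ (i, s') = B $$ (\<pi> i, \<pi> s')" using IH[OF s'(1,2)] by blast
        show "\<And>r. r < n \<Longrightarrow> B $$ (r, \<pi> s') \<noteq> 0 \<Longrightarrow> R (m r) (m (\<pi> s'))"
          using suppB pi[OF s'(1)] by blast
        show "\<And>i. i < n \<Longrightarrow> m' i = m (\<pi> i)" by (rule mm')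
        show "m' s' = m (\<pi> s')" by (rule mm'[OF s'(1)])
        show "\<And>i j. i < n \<Longrightarrow> j < n \<Longrightarrow> R (m' i) (m' j) \<Longrightarrow> m' i \<noteq> m' j \<Longrightarrow> i < j" by (rule OP')
        show "\<And>i j. i < n \<Longrightarrow> j < n \<Longrightarrow> m' i = m' j \<Longrightarrow> (\<pi> i < \<pi> j \<longleftrightarrow> i < j)" by (rule fx)
        show "homogeneous m B (\<pi> s')" by (rule s'(3))
      qed
      have HT2: "homogeneous m B (\<pi> s')"
        if s': "s' < n" "\<pi> s' < j" "homogeneous m' B' s'" for s'
      proof -
        have "homogeneous m B (\<pi> s') \<and> \<psi> (low B (\<pi> s')) = low B' s'"
        proof (rule homog_transfer[where X=B' and Y=B and g=\<psi> and h=\<pi> and mX=m' and mY=m and R=R and n=n])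
          show "dim_row B = n" "dim_row B' = n" using Bc Bc' by auto
          show "\<And>r. r < n \<Longrightarrow> B $$ (r, \<pi> s') = B' $$ (\<psi> r, s')"
            using IH[OF s'(1,2) psi] pp' by simp
          show "\<And>i. i < n \<Longrightarrow> m i = m' (\<psi> i)" using mm'[OF psi] pp' by simp
          show "m (\<pi> s') = m' s'" using mm' s' by simp
          show "\<And>i. i < n \<Longrightarrow> \<psi> i < n" by (rule psi)
          show "\<And>i. i < n \<Longrightarrow> \<pi> i < n \<and> \<psi> (\<pi> i) = i" using pi pp by blast
          show "\<And>r. r < n \<Longrightarrow> B' $$ (r, s') \<noteq> 0 \<Longrightarrow> R (m' r) (m' s')"
            using suppB' s'(1) by blast
          show "\<And>i j. i < n \<Longrightarrow> j < n \<Longrightarrow> R (m i) (m j) \<Longrightarrow> m i \<noteq> m j \<Longrightarrow> i < j" by (rule OP)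
          show "\<And>i j. i < n \<Longrightarrow> j < n \<Longrightarrow> m i = m j \<Longrightarrow> (\<psi> i < \<psi> j \<longleftrightarrow> i < j)" by (rule fixinv)
          show "homogeneous m' B' s'" by (rule s'(3))
        qed
        then show ?thesis by simp
      qed
      have HT: "homogeneous m' B' s' \<longleftrightarrow> homogeneous m B (\<pi> s')"
        if s': "s' < n" "\<pi> s' < j" for s'
        using HT1[OF s'] HT2[OF s'] by blast
      from redB jn obtain S where S: "finite S" "S \<subseteq> {s. s < j \<and> homogeneous m B s \<and> R (m s) (m j)}"
        and Seq: "\<And>r. r < n \<Longrightarrow> B $$ (r, j) = A $$ (r, j) + (\<Sum>s\<in>S. B $$ (r, s))"
        and Bz: "\<And>s. s < j \<Longrightarrow> homogeneous m B s \<Longrightarrow> B $$ (low B s, j) = 0"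
        unfolding red_ok_def by (elim conjE allE[of _ j]) (simp, blast)
      define w where "w r = B $$ (\<pi> r, j)" for r
      have Sn: "\<And>s. s \<in> S \<Longrightarrow> s < n" using S jn by auto
      have injS: "inj_on \<psi> S" by (rule inj_on_inverseI[where g=\<pi>]) (use pp' Sn in auto)
      have Tsub: "\<psi> ` S \<subseteq> {s'. s' < j' \<and> homogeneous m' B' s'}"
      proof
        fix x assume "x \<in> \<psi> ` S"
        then obtain s where s: "s \<in> S" "x = \<psi> s" by auto
        have sn: "s < n" using Sn s by simp
        have xs: "x < n" "\<pi> x = s" using psi[OF sn] pp'[OF sn] s by auto
        have sj: "s < j" "homogeneous m B s" "R (m s) (m j)" using S s by auto
        have "x < j'"
        proof (cases "m' x = m' j'")
          case True then show ?thesis using fx[OF xs(1) j'(1)] xs sj j' by simp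
        next
          case False
          moreover have "R (m' x) (m' j')" using mm' xs j' sj by simp
          ultimately show ?thesis using OP'[OF xs(1) j'(1)] by simp
        qed
        moreover have "homogeneous m' B' x" using HT[OF xs(1)] xs sj by simp
        ultimately show "x \<in> {s'. s' < j' \<and> homogeneous m' B' s'}" by simp
      qed
      have weq: "w r = A' $$ (r, j') + (\<Sum>s'\<in>\<psi> ` S. B' $$ (r, s'))" if r: "r < n" for r
      proof -
        have "(\<Sum>s'\<in>\<psi> ` S. B' $$ (r, s')) = (\<Sum>s\<in>S. B' $$ (r, \<psi> s))"
          by (rule sum.reindex[OF injS, unfolded comp_def])
        also have "\<dots> = (\<Sum>s\<in>S. B $$ (\<pi> r, s))"
        proof (rule sum.cong[OF refl])
          fix s assume s: "s \<in> S"
          have sn: "s < n" using Sn s by simp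
          have "s < j" using S s by auto
          then show "B' $$ (r, \<psi> s) = B $$ (\<pi> r, s)" using IH[OF psi[OF sn] _ r] pp'[OF sn] by simp
        qed
        finally have "(\<Sum>s'\<in>\<psi> ` S. B' $$ (r, s')) = (\<Sum>s\<in>S. B $$ (\<pi> r, s))" .
        moreover have "A' $$ (r, j') = A $$ (\<pi> r, j)" using AA'[OF r j'(1)] j' by simp
        ultimately show ?thesis unfolding w_def using Seq[OF pi[OF r]] by (simp only:)
      qed
      have wz: "w (low B' s') = 0" if s': "s' < j'" "homogeneous m' B' s'" for s'
      proof -
        have s'n: "s' < n" using s' j' by simp
        have nz': "nz_col B' s'" using s' unfolding homogeneous_def by simp
        have l'n: "low B' s' < n" using low_props(1)[OF nz'] Bc' by simp
        have ml: "m' (low B' s') = m' s'" using s' unfolding homogeneous_def by simp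
        show ?thesis
        proof (cases "R (m' s') (m' j')")
          case True
          have ps: "\<pi> s' < j"
          proof (cases "m' s' = m' j'")
            case True then show ?thesis using fx[OF s'n j'(1)] s' j' by simp
          next
            case False
            then show ?thesis using OP[OF pi[OF s'n] pi[OF j'(1)]] \<open>R (m' s') (m' j')\<close> mm' s'n j' by simp
          qed
          have hB: "homogeneous m B (\<pi> s')" using HT2[OF s'n ps s'(2)] .
          have "\<pi> (low B' s') = low B (\<pi> s')" using HT1[OF s'n ps hB] by simp
          then show ?thesis unfolding w_def using Bz[OF ps hB] by simp
        next
          case False
          show ?thesis
          proof (rule ccontr)
            assume "w (low B' s') \<noteq> 0"
            then have "R (m (\<pi> (low B' s'))) (m j)" unfolding w_def using suppB[OF pi[OF l'n] jn] by simp
            then have "R (m' s') (m' j')" using mm'[OF l'n] mm'[OF j'(1)] ml j' by simp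
            then show False using False by simp
          qed
        qed
      qed
      have "w i = B' $$ (i, j')"
        by (rule unique_col[OF redB' j'(1) finite_imageI[OF S(1)] Tsub weq wz i])
      then show "B' $$ (i, j') = B $$ (\<pi> i, j)" unfolding w_def by simp
    qed
  qed
  fix i j assume "i < n" "j < n"
  then show "conmat_reduce m' A' $$ (i, j) = conmat_reduce m A $$ (\<pi> i, \<pi> j)"
    using claim[of "\<pi> j"] unfolding B_def B'_def by blast
qed

lemma perm_conj:
  fixes B B' :: "bit mat"
  assumes J: "finite J" and J': "finite J'"
    and piJ: "\<And>k. k \<in> J' \<Longrightarrow> \<pi> k \<in> J" and psiJ: "\<And>k. k \<in> J \<Longrightarrow> \<psi> k \<in> J'"
    and pp: "\<And>k. k \<in> J' \<Longrightarrow> \<psi> (\<pi> k) = k" and pp': "\<And>k. k \<in> J \<Longrightarrow> \<pi> (\<psi> k) = k"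
    and BB': "\<And>i j. i \<in> J' \<Longrightarrow> j \<in> J' \<Longrightarrow> B' $$ (i, j) = B $$ (\<pi> i, \<pi> j)"
  defines "js \<equiv> sorted_list_of_set J" and "js' \<equiv> sorted_list_of_set J'"
  defines "S \<equiv> mat (length js) (length js) (\<lambda>(a, b). B $$ (js ! a, js ! b))"
    and "S' \<equiv> mat (length js') (length js') (\<lambda>(a, b). B' $$ (js' ! a, js' ! b))"
  shows "\<exists>Rm. permutation_matrix Rm \<and> Rm \<in> carrier_mat (dim_row S) (dim_row S) \<and>
           transpose_mat Rm * S * Rm = S'"
proof -
  define L where "L = length js"
  have bpi: "bij_betw \<pi> J' J" by (rule bij_betw_byWitness[where f'=\<psi>]) (use pp pp' piJ psiJ in auto)
  have cardJ: "card J' = card J" using bij_betw_same_card[OF bpi] .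
  have L': "length js' = L" unfolding L_def js_def js'_def using cardJ by simp
  have bf: "bij_betw ((!) js) {..<L} J"
    by (rule bij_betw_nth) (use J in \<open>auto simp: js_def L_def\<close>)
  have bf': "bij_betw ((!) js') {..<L} J'"
    by (rule bij_betw_nth) (use J' L' in \<open>auto simp: js'_def\<close>)
  define g where "g = inv_into {..<L} ((!) js)"
  have bg: "bij_betw g J {..<L}" unfolding g_def by (rule bij_betw_inv_into[OF bf])
  define \<tau> where "\<tau> = g \<circ> (\<pi> \<circ> (!) js')"
  have bt: "bij_betw \<tau> {..<L} {..<L}" unfolding \<tau>_def
    by (rule bij_betw_trans[OF bij_betw_trans[OF bf' bpi] bg])
  define \<sigma> where "\<sigma> a = (if a < L then \<tau> a else a)" for a
  have bs: "bij_betw \<sigma> {..<L} {..<L}" using bt by (rule bij_betw_cong[THEN iffD1, rotated]) (simp add: \<sigma>_def)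
  have ps: "\<sigma> permutes {..<L}" by (rule bij_imp_permutes[OF bs]) (simp add: \<sigma>_def)
  have sL: "\<sigma> a < L" if "a < L" for a using bs that by (auto dest: bij_betwE)
  have fs: "js ! (\<sigma> a) = \<pi> (js' ! a)" if a: "a < L" for a
  proof -
    have "js' ! a \<in> J'" using bf' a by (auto dest: bij_betwE)
    then have "\<pi> (js' ! a) \<in> (!) js ` {..<L}" using piJ bf by (auto simp: bij_betw_def)
    then show ?thesis unfolding \<sigma>_def \<tau>_def g_def using a by (simp add: f_inv_into_f)
  qed
  define Rm :: "bit mat" where "Rm = mat L L (\<lambda>(i, j). if i = \<sigma> j then 1 else 0)"
  have Sc: "S \<in> carrier_mat L L" unfolding S_def L_def by simp
  have e1: "(transpose_mat Rm * S) $$ (a, c) = S $$ (\<sigma> a, c)" if "a < L" "c < L" for a c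
  proof -
    have "(transpose_mat Rm * S) $$ (a, c) = (\<Sum>k\<in>{0..<L}. (if k = \<sigma> a then 1 else 0) * S $$ (k, c))"
      using that Sc unfolding Rm_def by (simp add: scalar_prod_def)
    also have "\<dots> = (\<Sum>k\<in>{0..<L}. (if k = \<sigma> a then S $$ (k, c) else 0))"
      by (rule sum.cong) auto
    also have "\<dots> = S $$ (\<sigma> a, c)" using sL[OF that(1)] by (simp add: sum.delta)
    finally show ?thesis .
  qed
  have e2: "(transpose_mat Rm * S * Rm) $$ (a, b) = S $$ (\<sigma> a, \<sigma> b)" if ab: "a < L" "b < L" for a b
  proof -
    have "(transpose_mat Rm * S * Rm) $$ (a, b) = (\<Sum>c\<in>{0..<L}. (transpose_mat Rm * S) $$ (a, c) * (if c = \<sigma> b then 1 else 0))"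
      using ab Sc unfolding Rm_def by (simp add: scalar_prod_def)
    also have "\<dots> = (\<Sum>c\<in>{0..<L}. (if c = \<sigma> b then S $$ (\<sigma> a, c) else 0))"
      by (rule sum.cong) (auto simp: e1 ab)
    also have "\<dots> = S $$ (\<sigma> a, \<sigma> b)" using sL[OF ab(2)] by (simp add: sum.delta)
    finally show ?thesis .
  qed
  show ?thesis
  proof (intro exI conjI)
    show "permutation_matrix Rm" unfolding permutation_matrix_def Rm_def using ps by (intro exI[of _ L] conjI exI[of _ \<sigma>]) auto
    show "Rm \<in> carrier_mat (dim_row S) (dim_row S)" using Sc unfolding Rm_def by simp
    show "transpose_mat Rm * S * Rm = S'"
    proof (rule eq_matI)
      show "dim_row (transpose_mat Rm * S * Rm) = dim_row S'" unfolding Rm_def S'_def L' by simp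
      show "dim_col (transpose_mat Rm * S * Rm) = dim_col S'" unfolding Rm_def S'_def L' by simp
      fix a b assume "a < dim_row S'" "b < dim_col S'"
      then have ab: "a < L" "b < L" unfolding S'_def L' by auto
      have "S' $$ (a, b) = B' $$ (js' ! a, js' ! b)" unfolding S'_def using ab L' by simp
      also have "\<dots> = B $$ (\<pi> (js' ! a), \<pi> (js' ! b))"
        using BB' bf' ab by (auto dest: bij_betwE)
      also have "\<dots> = S $$ (\<sigma> a, \<sigma> b)" unfolding S_def using fs ab sL L_def by simp
      finally show "(transpose_mat Rm * S * Rm) $$ (a, b) = S' $$ (a, b)" using e2[OF ab] by simp
    qed
  qed
qed

lemma conmat_perm_abs:
  assumes A: "A \<in> carrier_mat n n" and A': "A' \<in> carrier_mat n n"
    and pi: "\<And>i. i < n \<Longrightarrow> \<pi> i < n" and psi: "\<And>i. i < n \<Longrightarrow> \<psi> i < n"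
    and pp: "\<And>i. i < n \<Longrightarrow> \<psi> (\<pi> i) = i" and pp': "\<And>i. i < n \<Longrightarrow> \<pi> (\<psi> i) = i"
    and AA': "\<And>i j. i < n \<Longrightarrow> j < n \<Longrightarrow> A' $$ (i, j) = A $$ (\<pi> i, \<pi> j)"
    and mm': "\<And>i. i < n \<Longrightarrow> m' i = m (\<pi> i)"
    and suppA: "\<And>i j. i < n \<Longrightarrow> j < n \<Longrightarrow> A $$ (i, j) \<noteq> 0 \<Longrightarrow> R (m i) (m j)"
    and tr: "\<And>a b c. a < n \<Longrightarrow> b < n \<Longrightarrow> c < n \<Longrightarrow> R (m a) (m b) \<Longrightarrow> R (m b) (m c) \<Longrightarrow> R (m a) (m c)"
    and OP: "\<And>i j. i < n \<Longrightarrow> j < n \<Longrightarrow> R (m i) (m j) \<Longrightarrow> m i \<noteq> m j \<Longrightarrow> i < j"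
    and OP': "\<And>i j. i < n \<Longrightarrow> j < n \<Longrightarrow> R (m' i) (m' j) \<Longrightarrow> m' i \<noteq> m' j \<Longrightarrow> i < j"
    and fx: "\<And>i j. i < n \<Longrightarrow> j < n \<Longrightarrow> m' i = m' j \<Longrightarrow> (\<pi> i < \<pi> j \<longleftrightarrow> i < j)"
  shows "\<exists>Rm. permutation_matrix Rm \<and> Rm \<in> carrier_mat (dim_row (conmat m A)) (dim_row (conmat m A)) \<and>
           transpose_mat Rm * conmat m A * Rm = conmat m' A'"
proof -
  define B where "B = conmat_reduce m A"
  define B' where "B' = conmat_reduce m' A'"
  have Bfull: "\<And>i j. i < n \<Longrightarrow> j < n \<Longrightarrow> B' $$ (i, j) = B $$ (\<pi> i, \<pi> j)"
    unfolding B_def B'_def by (rule reduce_perm[where m=m and m'=m' and R=R and \<pi>=\<pi> and \<psi>=\<psi> and A=A and A'=A' and n=n, OF A A' pi psi pp pp' AA' mm' suppA tr OP OP' fx])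
  have redB: "red_ok n m R A n B" unfolding B_def
    by (rule reduce_ok) (use A suppA tr in blast)+
  have redB': "red_ok n m' R A' n B'" unfolding B'_def
  proof (rule reduce_ok)
    show "A' \<in> carrier_mat n n" by fact
    show "\<forall>i<n. \<forall>j<n. A' $$ (i, j) \<noteq> 0 \<longrightarrow> R (m' i) (m' j)"
      using AA' suppA mm' pi by simp
    show "\<forall>a b c. a < n \<longrightarrow> b < n \<longrightarrow> c < n \<longrightarrow> R (m' a) (m' b) \<longrightarrow> R (m' b) (m' c) \<longrightarrow> R (m' a) (m' c)"
  proof (intro allI impI)
    fix a b c assume abc: "a < n" "b < n" "c < n" and r1: "R (m' a) (m' b)" and r2: "R (m' b) (m' c)"
    show "R (m' a) (m' c)" using tr[OF pi[OF abc(1)] pi[OF abc(2)] pi[OF abc(3)]] r1 r2 mm' abc by simp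
  qed
  qed
  have Bc: "B \<in> carrier_mat n n" using redB unfolding red_ok_def by blast
  have Bc': "B' \<in> carrier_mat n n" using redB' unfolding red_ok_def by blast
  have suppB: "\<And>r j. r < n \<Longrightarrow> j < n \<Longrightarrow> B $$ (r, j) \<noteq> 0 \<Longrightarrow> R (m r) (m j)"
    using redB unfolding red_ok_def by blast
  have suppB': "\<And>r j. r < n \<Longrightarrow> j < n \<Longrightarrow> B' $$ (r, j) \<noteq> 0 \<Longrightarrow> R (m' r) (m' j)"
    using redB' unfolding red_ok_def by blast
  have fixinv: "(\<psi> i < \<psi> j \<longleftrightarrow> i < j)" if i: "i < n" and j: "j < n" and eq: "m i = m j" for i j
  proof -
    have "m' (\<psi> i) = m' (\<psi> j)" using mm'[OF psi[OF i]] mm'[OF psi[OF j]] pp'[OF i] pp'[OF j] eq by simp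
    from fx[OF psi[OF i] psi[OF j] this] show ?thesis using pp'[OF i] pp'[OF j] by simp
  qed
  have HT1: "homogeneous m' B' s' \<and> \<pi> (low B' s') = low B (\<pi> s')"
    if s': "s' < n" "homogeneous m B (\<pi> s')" for s'
  proof (rule homog_transfer[where X=B and Y=B' and g=\<pi> and h=\<psi> and mX=m and mY=m' and R=R and n=n])
    show "dim_row B = n" "dim_row B' = n" using Bc Bc' by auto
    show "\<And>i. i < n \<Longrightarrow> \<pi> i < n" by (rule pi)
    show "\<And>i. i < n \<Longrightarrow> \<psi> i < n \<and> \<pi> (\<psi> i) = i" using psi pp' by blast
    show "\<And>i. i < n \<Longrightarrow> B' $$ (i, s') = B $$ (\<pi> i, \<pi> s')" using Bfull s'(1) by blast
    show "\<And>r. r < n \<Longrightarrow> B $$ (r, \<pi> s') \<noteq> 0 \<Longrightarrow> R (m r) (m (\<pi> s'))"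
      using suppB pi[OF s'(1)] by blast
    show "\<And>i. i < n \<Longrightarrow> m' i = m (\<pi> i)" by (rule mm')
    show "m' s' = m (\<pi> s')" by (rule mm'[OF s'(1)])
    show "\<And>i j. i < n \<Longrightarrow> j < n \<Longrightarrow> R (m' i) (m' j) \<Longrightarrow> m' i \<noteq> m' j \<Longrightarrow> i < j" by (rule OP')
    show "\<And>i j. i < n \<Longrightarrow> j < n \<Longrightarrow> m' i = m' j \<Longrightarrow> (\<pi> i < \<pi> j \<longleftrightarrow> i < j)" by (rule fx)
    show "homogeneous m B (\<pi> s')" by (rule s'(2))
  qed
  have HT2: "homogeneous m B (\<pi> s')"
    if s': "s' < n" "homogeneous m' B' s'" for s'
  proof -
    have "homogeneous m B (\<pi> s') \<and> \<psi> (low B (\<pi> s')) = low B' s'"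
    proof (rule homog_transfer[where X=B' and Y=B and g=\<psi> and h=\<pi> and mX=m' and mY=m and R=R and n=n])
      show "dim_row B = n" "dim_row B' = n" using Bc Bc' by auto
      show "\<And>r. r < n \<Longrightarrow> B $$ (r, \<pi> s') = B' $$ (\<psi> r, s')"
        using Bfull[OF psi s'(1)] pp' by simp
      show "\<And>i. i < n \<Longrightarrow> m i = m' (\<psi> i)" using mm'[OF psi] pp' by simp
      show "m (\<pi> s') = m' s'" using mm' s' by simp
      show "\<And>i. i < n \<Longrightarrow> \<psi> i < n" by (rule psi)
      show "\<And>i. i < n \<Longrightarrow> \<pi> i < n \<and> \<psi> (\<pi> i) = i" using pi pp by blast
      show "\<And>r. r < n \<Longrightarrow> B' $$ (r, s') \<noteq> 0 \<Longrightarrow> R (m' r) (m' s')"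
        using suppB' s'(1) by blast
      show "\<And>i j. i < n \<Longrightarrow> j < n \<Longrightarrow> R (m i) (m j) \<Longrightarrow> m i \<noteq> m j \<Longrightarrow> i < j" by (rule OP)
      show "\<And>i j. i < n \<Longrightarrow> j < n \<Longrightarrow> m i = m j \<Longrightarrow> (\<psi> i < \<psi> j \<longleftrightarrow> i < j)" by (rule fixinv)
      show "homogeneous m' B' s'" by (rule s'(2))
    qed
    then show ?thesis by simp
  qed
  have HT: "homogeneous m' B' k \<longleftrightarrow> homogeneous m B (\<pi> k)" if "k < n" for k
    using HT1 HT2 that by blast
  have TG: "targetable m' B' k \<longleftrightarrow> targetable m B (\<pi> k)" if k: "k < n" for k
  proof
    assume "targetable m' B' k"
    then obtain j where j: "j < n" "homogeneous m' B' j" "low B' j = k"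
      unfolding targetable_def using Bc' by auto
    then have "homogeneous m B (\<pi> j) \<and> low B (\<pi> j) = \<pi> k" using HT1 HT2 by metis
    then show "targetable m B (\<pi> k)" unfolding targetable_def using Bc pi[OF j(1)] by auto
  next
    assume "targetable m B (\<pi> k)"
    then obtain j0 where j0: "j0 < n" "homogeneous m B j0" "low B j0 = \<pi> k"
      unfolding targetable_def using Bc by auto
    define j where "j = \<psi> j0"
    have j: "j < n" "\<pi> j = j0" unfolding j_def using psi pp' j0 by auto
    have hj: "homogeneous m' B' j" "\<pi> (low B' j) = \<pi> k" using HT1[of j] j j0 by auto
    have "low B' j < n" using hj(1) low_props(1)[of B' j] Bc' unfolding homogeneous_def by simp
    then have "low B' j = k" using hj(2) pp k by metis
    then show "targetable m' B' k" unfolding targetable_def using Bc' j hj by auto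
  qed
  define J where "J = {k. k < n \<and> \<not> homogeneous m B k \<and> \<not> targetable m B k}"
  define J' where "J' = {k. k < n \<and> \<not> homogeneous m' B' k \<and> \<not> targetable m' B' k}"
  have cA: "conmat m A = mat (length (sorted_list_of_set J)) (length (sorted_list_of_set J))
      (\<lambda>(a, b). B $$ (sorted_list_of_set J ! a, sorted_list_of_set J ! b))"
    unfolding conmat_def Let_def B_def J_def using A by simp
  have cA': "conmat m' A' = mat (length (sorted_list_of_set J')) (length (sorted_list_of_set J'))
      (\<lambda>(a, b). B' $$ (sorted_list_of_set J' ! a, sorted_list_of_set J' ! b))"
    unfolding conmat_def Let_def B'_def J'_def using A' by simp
  show ?thesis unfolding cA cA'
  proof (rule perm_conj[where \<pi>=\<pi> and \<psi>=\<psi>])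
    show "finite J" "finite J'" unfolding J_def J'_def by auto
    show "\<And>k. k \<in> J' \<Longrightarrow> \<pi> k \<in> J" unfolding J_def J'_def using HT TG pi by auto
    show "\<And>k. k \<in> J \<Longrightarrow> \<psi> k \<in> J'" unfolding J_def J'_def using HT TG psi pp' by fastforce
    show "\<And>k. k \<in> J' \<Longrightarrow> \<psi> (\<pi> k) = k" unfolding J'_def using pp by auto
    show "\<And>k. k \<in> J \<Longrightarrow> \<pi> (\<psi> k) = k" unfolding J_def using pp' by auto
    show "\<And>i j. i \<in> J' \<Longrightarrow> j \<in> J' \<Longrightarrow> B' $$ (i, j) = B $$ (\<pi> i, \<pi> j)"
      unfolding J'_def using Bfull by auto
  qed
qed

lemma morse_index_props:
  assumes md: "morse_decomposition K \<V> P leP M" and x: "x \<in> K"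
  shows "morse_index P M x \<in> P \<and> x \<in> M (morse_index P M x)"
proof -
  have U: "(\<Union>p\<in>P. M p) = K" using md unfolding morse_decomposition_def by (elim conjE) assumption
  have D: "\<forall>p\<in>P. \<forall>q\<in>P. p \<noteq> q \<longrightarrow> M p \<inter> M q = {}"
    using md unfolding morse_decomposition_def by (elim conjE) assumption
  have "x \<in> (\<Union>p\<in>P. M p)" using U x by simp
  then obtain p where p: "p \<in> P" "x \<in> M p" by (elim UN_E)
  have uq: "q = p" if q: "q \<in> P \<and> x \<in> M q" for q
  proof (rule ccontr)
    assume "q \<noteq> p"
    then have "M q \<inter> M p = {}" using D q p by blast
    then show False using q p by blast
  qed
  have "morse_index P M x = p" unfolding morse_index_def
    by (rule the_equality) (use p uq in blast)+
  then show ?thesis using p by simp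
qed

theorem corollary1:
  fixes K :: "'v set set" and \<V> :: "'v set set set"
    and P :: "'p set" and leP :: "'p \<Rightarrow> 'p \<Rightarrow> bool" and M :: "'p \<Rightarrow> 'v set set"
    and e e' :: "'v set list"
  assumes "simplicial_complex K"
    and "multivector_field K \<V>"
    and "morse_decomposition K \<V> P leP M"
    and "admissible_enum K P leP M e"
    and "admissible_enum K P leP M e'"
    and "morse_fixed P M e e'"
  shows "\<exists>R. permutation_matrix R \<and> R \<in> carrier_mat (dim_row (conmat_of_enum P M e)) (dim_row (conmat_of_enum P M e)) \<and>
             transpose_mat R * conmat_of_enum P M e * R = conmat_of_enum P M e'"
proof -
  note md = assms(3) and ad = assms(4) and ad' = assms(5) and mf = assms(6)
  define n where "n = length e"
  have de: "distinct e" "set e = K" using ad unfolding admissible_enum_def enumeration_def by auto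
  have de': "distinct e'" "set e' = K" using ad' unfolding admissible_enum_def enumeration_def by auto
  have len': "length e' = n" unfolding n_def using de de' distinct_card by metis
  have be: "bij_betw ((!) e) {..<n} K" by (rule bij_betw_nth) (use de in \<open>auto simp: n_def\<close>)
  have be': "bij_betw ((!) e') {..<n} K" by (rule bij_betw_nth) (use de' len' in auto)
  define \<pi> where "\<pi> k = inv_into {..<n} ((!) e) (e' ! k)" for k
  define \<psi> where "\<psi> k = inv_into {..<n} ((!) e') (e ! k)" for k
  have e'K: "e' ! k \<in> K" if "k < n" for k using be' that by (auto dest: bij_betwE)
  have eK: "e ! k \<in> K" if "k < n" for k using be that by (auto dest: bij_betwE)
  have pi: "\<pi> k < n \<and> e ! (\<pi> k) = e' ! k" if k: "k < n" for k
  proof -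
    have "e' ! k \<in> (!) e ` {..<n}" using e'K[OF k] be by (auto simp: bij_betw_def)
    then show ?thesis unfolding \<pi>_def using inv_into_into[of "e' ! k" "(!) e" "{..<n}"] f_inv_into_f[of "e' ! k" "(!) e" "{..<n}"]
      by (simp only: lessThan_iff)
  qed
  have psi: "\<psi> k < n \<and> e' ! (\<psi> k) = e ! k" if k: "k < n" for k
  proof -
    have "e ! k \<in> (!) e' ` {..<n}" using eK[OF k] be' by (auto simp: bij_betw_def)
    then show ?thesis unfolding \<psi>_def using inv_into_into[of "e ! k" "(!) e'" "{..<n}"] f_inv_into_f[of "e ! k" "(!) e'" "{..<n}"]
      by (simp only: lessThan_iff)
  qed
  have pp: "\<psi> (\<pi> k) = k" if k: "k < n" for k
  proof -
    have "e' ! (\<psi> (\<pi> k)) = e' ! k" using psi[of "\<pi> k"] pi[OF k] by simp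
    moreover have "\<psi> (\<pi> k) < length e'" "k < length e'" using psi[of "\<pi> k"] pi[OF k] k len' by auto
    ultimately show ?thesis using nth_eq_iff_index_eq[OF de'(1)] by blast
  qed
  have pp': "\<pi> (\<psi> k) = k" if k: "k < n" for k
  proof -
    have "e ! (\<pi> (\<psi> k)) = e ! k" using pi[of "\<psi> k"] psi[OF k] by simp
    moreover have "\<pi> (\<psi> k) < length e" "k < length e" using pi[of "\<psi> k"] psi[OF k] k n_def by auto
    ultimately show ?thesis using nth_eq_iff_index_eq[OF de(1)] by blast
  qed
  define m where "m k = morse_index P M (e ! k)" for k
  define m' where "m' k = morse_index P M (e' ! k)" for k
  have mP: "m k \<in> P \<and> e ! k \<in> M (m k)" if "k < n" for k
    unfolding m_def using morse_index_props[OF md eK[OF that]] .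
  have mP': "m' k \<in> P \<and> e' ! k \<in> M (m' k)" if "k < n" for k
    unfolding m'_def using morse_index_props[OF md e'K[OF that]] .
  have mm': "m' k = m (\<pi> k)" if "k < n" for k unfolding m_def m'_def using pi[OF that] by simp
  define A where "A = boundary_matrix e"
  define A' where "A' = boundary_matrix e'"
  have Ac: "A \<in> carrier_mat n n" unfolding A_def boundary_matrix_def n_def by simp
  have Ac': "A' \<in> carrier_mat n n" unfolding A'_def boundary_matrix_def using len' by simp
  have AA': "A' $$ (i, j) = A $$ (\<pi> i, \<pi> j)" if "i < n" "j < n" for i j
    unfolding A_def A'_def boundary_matrix_def using that pi len' n_def by simp
  have po: "partial_order_pred P leP" using md unfolding morse_decomposition_def by (elim conjE) assumption
  have paths: "\<forall>ps p q. is_path K \<V> ps \<and> p \<in> P \<and> q \<in> P \<and> hd ps \<in> M p \<and> last ps \<in> M q \<longrightarrow> leP q p"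
    using md unfolding morse_decomposition_def by (elim conjE) assumption
  have suppA: "leP (m i) (m j)" if ij: "i < n" "j < n" and nz: "A $$ (i, j) \<noteq> 0" for i j
  proof -
    have "codim1_face (e ! i) (e ! j)" using nz ij unfolding A_def boundary_matrix_def n_def by (auto split: if_splits)
    then have sub: "e ! i \<subseteq> e ! j" unfolding codim1_face_def by simp
    have "is_path K \<V> [e ! j, e ! i]"
      unfolding is_path_def F_mv_def closure_sc_def using eK ij sub by (auto simp: less_Suc_eq)
    moreover have "hd [e ! j, e ! i] \<in> M (m j)" "last [e ! j, e ! i] \<in> M (m i)" using mP ij by auto
    moreover have "m j \<in> P" "m i \<in> P" using mP ij by auto
    ultimately show ?thesis using paths[rule_format, of "[e ! j, e ! i]" "m j" "m i"] by blast
  qed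
  have tr: "leP (m a) (m c)" if "a < n" "b < n" "c < n" "leP (m a) (m b)" "leP (m b) (m c)" for a b c
  proof -
    have "m a \<in> P" "m b \<in> P" "m c \<in> P" using mP that by auto
    moreover have "\<forall>p\<in>P. \<forall>q\<in>P. \<forall>r\<in>P. leP p q \<and> leP q r \<longrightarrow> leP p r"
      using po unfolding partial_order_pred_def by (elim conjE) assumption
    ultimately show ?thesis using that(4,5) by blast
  qed
  have OPgen: "i < j" if ad: "admissible_enum K P leP M f" and f: "length f = n"
    and ij: "i < n" "j < n" and mf: "\<And>k. k < n \<Longrightarrow> mf k = morse_index P M (f ! k)"
    and mfP: "\<And>k. k < n \<Longrightarrow> mf k \<in> P"
    and R: "leP (mf i) (mf j)" and ne: "mf i \<noteq> mf j" for f mf i j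
  proof (rule ccontr)
    assume "\<not> i < j"
    then have ji: "j \<le> i" by simp
    have "\<exists>lin. linear_extension P leP lin \<and>
        (\<forall>i j. i \<le> j \<and> j < length f \<longrightarrow> lin (morse_index P M (f ! i)) (morse_index P M (f ! j)))"
      using ad unfolding admissible_enum_def by (elim conjE) assumption
    then obtain lin where lin: "linear_extension P leP lin"
      and mono: "\<forall>i j. i \<le> j \<and> j < length f \<longrightarrow> lin (morse_index P M (f ! i)) (morse_index P M (f ! j))"
      by blast
    have ext: "\<forall>p\<in>P. \<forall>q\<in>P. leP p q \<longrightarrow> lin p q" using lin unfolding linear_extension_def by (elim conjE) assumption
    have antis: "\<forall>p\<in>P. \<forall>q\<in>P. lin p q \<and> lin q p \<longrightarrow> p = q"
      using lin unfolding linear_extension_def partial_order_pred_def by (elim conjE) assumption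
    have Pi: "mf i \<in> P" "mf j \<in> P" using mfP ij by auto
    have "lin (mf j) (mf i)" using mono ji ij f mf by auto
    moreover have "lin (mf i) (mf j)" using ext Pi R by blast
    ultimately have "mf i = mf j" using antis Pi by blast
    then show False using ne by simp
  qed
  have OP: "i < j" if "i < n" "j < n" "leP (m i) (m j)" "m i \<noteq> m j" for i j
    by (rule OPgen[OF ad n_def[symmetric] that(1,2), of m]) (use that mP m_def in auto)
  have OP': "i < j" if "i < n" "j < n" "leP (m' i) (m' j)" "m' i \<noteq> m' j" for i j
    by (rule OPgen[OF ad' len' that(1,2), of m']) (use that mP' m'_def in auto)
  have fx: "(\<pi> i < \<pi> j \<longleftrightarrow> i < j)" if ij: "i < n" "j < n" and eq: "m' i = m' j" for i j
  proof -
    have "e ! (\<pi> i) \<in> M (m' i)" using pi[OF ij(1)] mP'[OF ij(1)] by simp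
    moreover have "e ! (\<pi> j) \<in> M (m' i)" using pi[OF ij(2)] mP'[OF ij(2)] eq by simp
    moreover have "\<pi> i < length e" "\<pi> j < length e" "i < length e'" "j < length e'"
      using pi ij len' n_def by auto
    moreover have "e ! (\<pi> i) = e' ! i" "e ! (\<pi> j) = e' ! j" using pi ij by auto
    moreover have "m' i \<in> P" using mP'[OF ij(1)] by simp
    ultimately show ?thesis using mf[unfolded morse_fixed_def, rule_format, of "m' i" "\<pi> i" "\<pi> j" i j] by blast
  qed
  have main: "\<exists>Rm. permutation_matrix Rm \<and> Rm \<in> carrier_mat (dim_row (conmat m A)) (dim_row (conmat m A)) \<and>
           transpose_mat Rm * conmat m A * Rm = conmat m' A'"
  proof (rule conmat_perm_abs[where R=leP and \<pi>=\<pi> and \<psi>=\<psi> and n=n])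
    show "A \<in> carrier_mat n n" by (rule Ac)
    show "A' \<in> carrier_mat n n" by (rule Ac')
    show "\<And>i. i < n \<Longrightarrow> \<pi> i < n" using pi by blast
    show "\<And>i. i < n \<Longrightarrow> \<psi> i < n" using psi by blast
    show "\<And>i. i < n \<Longrightarrow> \<psi> (\<pi> i) = i" by (rule pp)
    show "\<And>i. i < n \<Longrightarrow> \<pi> (\<psi> i) = i" by (rule pp')
    show "\<And>i j. i < n \<Longrightarrow> j < n \<Longrightarrow> A' $$ (i, j) = A $$ (\<pi> i, \<pi> j)" by (rule AA')
    show "\<And>i. i < n \<Longrightarrow> m' i = m (\<pi> i)" by (rule mm')
    show "\<And>i j. i < n \<Longrightarrow> j < n \<Longrightarrow> A $$ (i, j) \<noteq> 0 \<Longrightarrow> leP (m i) (m j)" by (rule suppA)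
    show "\<And>a b c. a < n \<Longrightarrow> b < n \<Longrightarrow> c < n \<Longrightarrow> leP (m a) (m b) \<Longrightarrow> leP (m b) (m c) \<Longrightarrow> leP (m a) (m c)"
      by (rule tr)
    show "\<And>i j. i < n \<Longrightarrow> j < n \<Longrightarrow> leP (m i) (m j) \<Longrightarrow> m i \<noteq> m j \<Longrightarrow> i < j" by (rule OP)
    show "\<And>i j. i < n \<Longrightarrow> j < n \<Longrightarrow> leP (m' i) (m' j) \<Longrightarrow> m' i \<noteq> m' j \<Longrightarrow> i < j" by (rule OP')
    show "\<And>i j. i < n \<Longrightarrow> j < n \<Longrightarrow> m' i = m' j \<Longrightarrow> (\<pi> i < \<pi> j \<longleftrightarrow> i < j)" by (rule fx)
  qed
  have "conmat m A = conmat_of_enum P M e" unfolding conmat_of_enum_def m_def A_def by simp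
  moreover have "conmat m' A' = conmat_of_enum P M e'" unfolding conmat_of_enum_def m'_def A'_def by simp
  ultimately show ?thesis using main by simp
qed

end
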